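(* Let $S,T\subseteq\mathbb{Z}_{>0}$ be finite and let $x\in T$ be such that $T_{\ge x+1}\preceq S_{>x+1}$ and $x+1\notin S$. Then $x\notin T\triangleleft S$.
   Context: For a finite set $S\subseteq\mathbb{Z}_{>0}$, $S(i)$ denotes its $i$th smallest element, $S_{>y}=\{s\in S:s>y\}$, $S_{\ge y}=\{s\in S:s\ge y\}$. $T\preceq S$ means $|T|\ge|S|$ and $T(i)<S(i)$ for all $i\in[|S|]$. For finite $S,T$, $T\triangleleft S$ is computed by going through $S$ from largest to smallest; each $s$ picks the largest element of $T$ less than $s$ not yet picked (if one exists); $T\triangleleft S$ is the set of picked elements. *)

theory Defs
  imports Main
begin

text \<open>S(i): the i-th smallest element (1-indexed) of a finite set of naturals.\<close>
definition elem_at :: "nat set \<Rightarrow> nat \<Rightarrow> nat" where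
  "elem_at S i = sorted_list_of_set S ! (i - 1)"

definition dominated :: "nat set \<Rightarrow> nat set \<Rightarrow> bool" where
  "dominated T S \<longleftrightarrow> card T \<ge> card S \<and> (\<forall>i\<in>{1..card S}. elem_at T i < elem_at S i)"

text \<open>Greedy picking: go through the list (S in decreasing order); each s picks the
  largest not-yet-picked element of T less than s, if one exists. The second argument is
  the set of not-yet-picked elements of T.\<close>
fun pick_aux :: "nat list \<Rightarrow> nat set \<Rightarrow> nat set" where
  "pick_aux [] R = {}"
| "pick_aux (s # ss) R =
     (if {t \<in> R. t < s} = {} then pick_aux ss R
      else (let m = Max {t \<in> R. t < s} in insert m (pick_aux ss (R - {m}))))"

definition tri :: "nat set \<Rightarrow> nat set \<Rightarrow> nat set" where
  "tri T S = pick_aux (rev (sorted_list_of_set S)) T"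

end

theory Submission
  imports Defs
begin

lemma pick_step:
  assumes "{t \<in> R. t < s} \<noteq> {}"
  shows "pick_aux (s # ss) R = insert (Max {t \<in> R. t < s}) (pick_aux ss (R - {Max {t \<in> R. t < s}}))"
  by (subst pick_aux.simps) (simp only: assms if_False Let_def)

lemma pick_step0:
  assumes "{t \<in> R. t < s} = {}"
  shows "pick_aux (s # ss) R = pick_aux ss R"
  by (subst pick_aux.simps) (simp only: assms simp_thms if_True)

lemma pick_sub: "finite R \<Longrightarrow> t \<in> pick_aux ss R \<Longrightarrow> \<exists>s\<in>set ss. t < s"
proof (induction ss arbitrary: R)
  case Nil then show ?case by simp
next
  case (Cons s ss)
  show ?case
  proof (cases "{t \<in> R. t < s} = {}")
    case True then show ?thesis using Cons by (auto simp: pick_step0)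
  next
    case False
    let ?m = "Max {t \<in> R. t < s}"
    have mi: "?m \<in> {t \<in> R. t < s}" using False Cons.prems by (intro Max_in) auto
    from Cons.prems(2) have "t = ?m \<or> t \<in> pick_aux ss (R - {?m})" unfolding pick_step[OF False] by simp
    then show ?thesis
    proof
      assume "t = ?m"
      then show ?thesis using mi by auto
    next
      assume "t \<in> pick_aux ss (R - {?m})"
      then show ?thesis using Cons.IH Cons.prems by auto
    qed
  qed
qed

lemma main_pick:
  assumes "sorted_wrt (>) ss" "finite R" "x \<in> R" "x + 1 \<notin> set ss"
    "\<forall>y. card {s\<in>set ss. x+1<s \<and> s\<le>y} \<le> card {t\<in>R. x+1\<le>t \<and> t<y}"
  shows "x \<notin> pick_aux ss R"
  using assms
proof (induction ss arbitrary: R)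
  case Nil then show ?case by simp
next
  case (Cons s ss)
  show ?case
  proof (cases "s < x + 1")
    case True
    have "\<forall>s'\<in>set (s#ss). s' \<le> x" using Cons.prems(1) True by auto
    then show ?thesis using pick_sub[OF Cons.prems(2), of x "s#ss"] by fastforce
  next
    case False
    with Cons.prems(4) have sx: "x + 1 < s" by auto
    define B where "B y = {t\<in>R. x+1\<le>t \<and> t<y}" for y
    define A where "A y = {s'\<in>set ss. x+1<s' \<and> s'\<le>y}" for y
    have fB: "finite (B y)" for y using Cons.prems(2) by (simp add: B_def)
    have fA: "finite (A y)" for y by (simp add: A_def)
    have sA: "s \<notin> A y" for y using Cons.prems(1) by (auto simp: A_def)
    have ssl: "\<forall>s'\<in>set ss. s' < s" using Cons.prems(1) by auto
    have hyp: "card {s'\<in>set (s#ss). x+1<s' \<and> s'\<le>y} \<le> card (B y)" for y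
      using Cons.prems(5) by (simp add: B_def)
    have hs: "card (A y) + 1 \<le> card (B y)" if "s \<le> y" for y
    proof -
      have "{s'\<in>set (s#ss). x+1<s' \<and> s'\<le>y} = insert s (A y)" using that sx by (auto simp: A_def)
      then show ?thesis using hyp[of y] fA sA by simp
    qed
    have "card (B s) \<ge> 1" using hs[of s] by simp
    then have ne: "B s \<noteq> {}" by auto
    let ?C = "{t \<in> R. t < s}"
    let ?m = "Max ?C"
    have Cne: "?C \<noteq> {}" using ne by (auto simp: B_def)
    have fC: "finite ?C" using Cons.prems(2) by simp
    have mi: "?m \<in> ?C" by (rule Max_in[OF fC Cne])
    have mge: "x + 1 \<le> ?m"
    proof -
      obtain t where "t \<in> B s" using ne by auto
      then have "t \<in> ?C" "x+1 \<le> t" by (auto simp: B_def)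
      then show ?thesis using Max_ge[OF fC] by (meson le_trans)
    qed
    have IHp: "\<forall>y. card {s\<in>set ss. x+1<s \<and> s\<le>y} \<le> card {t\<in>R - {?m}. x+1\<le>t \<and> t<y}"
    proof
      fix y
      have eqB: "{t\<in>R - {?m}. x+1\<le>t \<and> t<y} = B y - {?m}" by (auto simp: B_def)
      have cB: "card (B y - {?m}) \<ge> card (B y) - 1" by (metis card_Diff_singleton_if diff_le_self eq_refl)
      show "card {s\<in>set ss. x+1<s \<and> s\<le>y} \<le> card {t\<in>R - {?m}. x+1\<le>t \<and> t<y}"
        unfolding eqB A_def[symmetric]
      proof (cases "s \<le> y")
        case True then show "card (A y) \<le> card (B y - {?m})" using hs[of y] cB by linarith
      next
        case ylt: False
        show "card (A y) \<le> card (B y - {?m})"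
        proof (cases "?m < y")
          case False
          then have "B y - {?m} = B y" by (auto simp: B_def)
          moreover have "{s'\<in>set (s#ss). x+1<s' \<and> s'\<le>y} = A y" using ylt by (auto simp: A_def)
          ultimately show ?thesis using hyp[of y] by simp
        next
          case True
          have "B y = B s"
          proof
            show "B y \<subseteq> B s" using ylt by (auto simp: B_def)
            show "B s \<subseteq> B y"
            proof
              fix t assume "t \<in> B s"
              then have "t \<in> ?C" by (auto simp: B_def)
              then have "t \<le> ?m" using Max_ge[OF fC] by blast
              then have "t < y" using True by linarith
              then show "t \<in> B y" using \<open>t \<in> B s\<close> by (auto simp: B_def)
            qed
          qed
          moreover have "A y \<subseteq> A s" using ylt by (auto simp: A_def)
          then have "card (A y) \<le> card (A s)" by (rule card_mono[OF fA])
          ultimately have "card (A y) + 1 \<le> card (B y)" using hs[of s] by simp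
          then show ?thesis using cB by linarith
        qed
      qed
    qed
    have "x \<noteq> ?m" using mge by auto
    moreover have "x \<notin> pick_aux ss (R - {?m})"
    proof (rule Cons.IH[OF _ _ _ _ IHp])
      show "sorted_wrt (>) ss" using Cons.prems(1) by simp
      show "finite (R - {?m})" using Cons.prems(2) by simp
      show "x \<in> R - {?m}" using Cons.prems(3) \<open>x \<noteq> ?m\<close> by simp
      show "x + 1 \<notin> set ss" using Cons.prems(4) by simp
    qed
    ultimately show ?thesis unfolding pick_step[OF Cne] by simp
  qed
qed

lemma sl_facts:
  assumes "finite A"
  shows "sorted (sorted_list_of_set A)" "distinct (sorted_list_of_set A)"
    "set (sorted_list_of_set A) = A" "length (sorted_list_of_set A) = card A"
  using assms by auto

lemma dom_count:
  fixes A B :: "nat set"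
  assumes fA: "finite A" and fB: "finite B" and d: "dominated B A"
  shows "card {a\<in>A. a\<le>y} \<le> card {b\<in>B. b<y}"
proof -
  define L where "L = sorted_list_of_set A"
  define M where "M = sorted_list_of_set B"
  define k where "k = card {a\<in>A. a\<le>y}"
  show ?thesis
  proof (cases "k = 0")
    case True then show ?thesis using k_def by linarith
  next
    case False
    have kA: "k \<le> card A" unfolding k_def using fA by (intro card_mono) auto
    have Lk: "L!(k-1) \<le> y"
    proof (rule ccontr)
      assume "\<not> L!(k-1) \<le> y"
      have "{a\<in>A. a\<le>y} \<subseteq> (!) L ` {0..<k-1}"
      proof
        fix a assume a: "a \<in> {a\<in>A. a\<le>y}"
        have "a \<in> set L" using a fA by (simp add: L_def)
        then obtain i where i: "i < length L" "a = L!i" by (auto simp: in_set_conv_nth)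
        have "i < k - 1"
        proof (rule ccontr)
          assume "\<not> i < k-1"
          then have "L!(k-1) \<le> L!i" using i fA by (intro sorted_nth_mono) (auto simp: L_def)
          then show False using a i \<open>\<not> L!(k-1) \<le> y\<close> by auto
        qed
        then show "a \<in> (!) L ` {0..<k-1}" using i by auto
      qed
      then have "k \<le> card ((!) L ` {0..<k-1})" unfolding k_def by (intro card_mono) auto
      also have "\<dots> \<le> k - 1" using card_image_le[of "{0..<k-1}" "(!) L"] by simp
      finally show False using False by simp
    qed
    have dd: "card B \<ge> card A" "elem_at B k < elem_at A k" using d kA False
      by (auto simp: dominated_def)
    then have Mk: "M!(k-1) < y" using Lk by (simp add: elem_at_def L_def M_def)
    have lM: "length M = card B" using fB by (simp add: M_def)
    have sub: "(!) M ` {0..<k} \<subseteq> {b\<in>B. b<y}"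
    proof
      fix b assume "b \<in> (!) M ` {0..<k}"
      then obtain i where i: "i < k" "b = M!i" by auto
      have "M!i \<le> M!(k-1)" using i fB kA dd lM by (intro sorted_nth_mono) (auto simp: M_def)
      moreover have "M!i \<in> B"
      proof -
        have "i < length M" using i kA dd lM by linarith
        then have "M!i \<in> set M" by (rule nth_mem)
        then show ?thesis using fB by (simp add: M_def)
      qed
      ultimately show "b \<in> {b\<in>B. b<y}" using i Mk by auto
    qed
    have inj: "inj_on ((!) M) {0..<k}"
      using kA dd lM fB by (intro inj_onI) (auto simp: M_def nth_eq_iff_index_eq)
    have fin: "finite {b\<in>B. b<y}" using fB by simp
    have c1: "card ((!) M ` {0..<k}) \<le> card {b\<in>B. b<y}" and c2: "card ((!) M ` {0..<k}) = k"
      by (rule card_mono[OF fin sub], rule card_image[OF inj, simplified])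
    from c1 c2 have "card {0..<k} \<le> card {b\<in>B. b<y}" by simp
    then show ?thesis by (simp add: k_def)
  qed
qed

theorem corollary4p13:
  fixes S T :: "nat set" and x :: nat
  assumes "finite S" and "finite T"
    and "\<forall>s\<in>S. 0 < s" and "\<forall>t\<in>T. 0 < t"
    and "x \<in> T"
    and "dominated {t\<in>T. t \<ge> x + 1} {s\<in>S. s > x + 1}"
    and "x + 1 \<notin> S"
  shows "x \<notin> tri T S"
proof -
  have c: "card {a\<in>{s\<in>S. s > x + 1}. a\<le>y} \<le> card {b\<in>{t\<in>T. t \<ge> x + 1}. b<y}" for y
    using assms by (intro dom_count) auto
  show ?thesis unfolding tri_def
  proof (rule main_pick)
    show "sorted_wrt (>) (rev (sorted_list_of_set S))"
      using assms(1) by (simp add: sorted_wrt_rev)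
    show "\<forall>y. card {s \<in> set (rev (sorted_list_of_set S)). x + 1 < s \<and> s \<le> y}
        \<le> card {t \<in> T. x + 1 \<le> t \<and> t < y}"
    proof
      fix y
      have "{s \<in> set (rev (sorted_list_of_set S)). x + 1 < s \<and> s \<le> y} = {a\<in>{s\<in>S. s > x + 1}. a\<le>y}"
        using assms(1) by auto
      moreover have "{t \<in> T. x + 1 \<le> t \<and> t < y} = {b\<in>{t\<in>T. t \<ge> x + 1}. b<y}" by auto
      ultimately show "card {s \<in> set (rev (sorted_list_of_set S)). x + 1 < s \<and> s \<le> y}
        \<le> card {t \<in> T. x + 1 \<le> t \<and> t < y}" using c[of y] by simp
    qed
  qed (use assms in auto)
qed

end
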